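(* Let $N\in\mathbb{Z}^+$ and $\boldsymbol{\mu}\in\mathbb{R}_+^N$ with $0\le\mu[n]\le1$ for all $n$, and suppose $t=\sum_{n=1}^N\mu[n]\ge1$ is not an integer. Define $m_1[n]=\big[\mu[n]-(t-\lfloor t\rfloor)\big]^+$, $m_2[n]=\big[\mu[n]-(\lceil t\rceil-t)\big]^+$, $$r=\frac{\lfloor t\rfloor(\lceil t\rceil-t)-\sum_{n} m_1[n]}{t-\sum_{n} m_1[n]-\sum_{n} m_2[n]},$$ $\boldsymbol{\mu}^{(\lfloor t\rfloor)}=\boldsymbol{m}_1+(\boldsymbol{\mu}-\boldsymbol{m}_1-\boldsymbol{m}_2)r$ and $\boldsymbol{\mu}^{(\lceil t\rceil)}=\boldsymbol{m}_2+(\boldsymbol{\mu}-\boldsymbol{m}_1-\boldsymbol{m}_2)(1-r)$. Then $\boldsymbol{\mu}^{(\lfloor t\rfloor)}$ and $\boldsymbol{\mu}^{(\lceil t\rceil)}$ are nonnegative vectors with $\boldsymbol{\mu}^{(\lfloor t\rfloor)}+\boldsymbol{\mu}^{(\lceil t\rceil)}=\boldsymbol{\mu}$, $\sum_n\mu^{(\lfloor t\rfloor)}[n]=\lfloor t\rfloor(\lceil t\rceil-t)$, $\sum_n\mu^{(\lceil t\rceil)}[n]=\lceil t\rceil(t-\lfloor t\rfloor)$, and for all $n\in[N]$, $\mu^{(\lfloor t\rfloor)}[n]\le\lceil t\rceil-t$ and $\mu^{(\lceil t\rceil)}[n]\le t-\lfloor t\rfloor$.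
   Context: $[x]^+=\max(x,0)$; vector operations are entrywise. *)

theory Defs
  imports Complex_Main
begin

definition pos_part :: "real \<Rightarrow> real" where
  "pos_part x = max x 0"

end

theory Submission
  imports Defs
begin

lemma sum_pos_part_bound:
  fixes A :: "nat set" and mu :: "nat \<Rightarrow> real" and K :: nat and a :: real
  assumes fA: "finite A" and mb: "\<forall>n\<in>A. 0 \<le> mu n \<and> mu n \<le> 1"
    and a0: "0 \<le> a" and a1: "a \<le> 1" and tb: "sum mu A \<le> real K + a"
  shows "(\<Sum>n\<in>A. pos_part (mu n - a)) \<le> real K * (1 - a)"
proof -
  define S where "S = {n\<in>A. mu n > a}"
  have fS: "finite S" and SA: "S \<subseteq> A" using fA by (auto simp: S_def)
  have "(\<Sum>n\<in>A. pos_part (mu n - a)) = (\<Sum>n\<in>S. pos_part (mu n - a))"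
    by (rule sum.mono_neutral_right[OF fA SA]) (auto simp: S_def pos_part_def)
  also have "\<dots> = (\<Sum>n\<in>S. mu n - a)"
    by (rule sum.cong) (auto simp: S_def pos_part_def)
  finally have eq: "(\<Sum>n\<in>A. pos_part (mu n - a)) = (\<Sum>n\<in>S. mu n - a)" .
  have b1: "(\<Sum>n\<in>S. mu n - a) \<le> real (card S) * (1 - a)"
  proof -
    have "(\<Sum>n\<in>S. mu n - a) \<le> (\<Sum>n\<in>S. 1 - a)"
      by (rule sum_mono) (use mb SA in auto)
    then show ?thesis by simp
  qed
  have b2: "(\<Sum>n\<in>S. mu n - a) \<le> sum mu A - real (card S) * a"
  proof -
    have "sum mu S \<le> sum mu A"
      by (rule sum_mono2[OF fA SA]) (use mb in auto)
    then show ?thesis by (simp add: sum_subtractf)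
  qed
  show ?thesis
  proof (cases "card S \<le> K")
    case True
    then have "real (card S) * (1 - a) \<le> real K * (1 - a)"
      using a1 by (intro mult_right_mono) auto
    then show ?thesis using eq b1 by linarith
  next
    case False
    then have "real (K + 1) * a \<le> real (card S) * a"
      using a0 by (intro mult_right_mono) auto
    then have "sum mu A - real (card S) * a \<le> real K * (1 - a)"
      using tb by (simp add: algebra_simps)
    then show ?thesis using eq b2 by linarith
  qed
qed

theorem mainTheorem8:
  fixes N :: nat and mu :: "nat \<Rightarrow> real" and t :: real
    and m1 m2 muF muC :: "nat \<Rightarrow> real" and r :: real
  assumes N_pos: "N \<ge> 1"
    and mu_bounds: "\<And>n. n \<in> {1..N} \<Longrightarrow> 0 \<le> mu n \<and> mu n \<le> 1"
    and t_def: "t = (\<Sum>n=1..N. mu n)"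
    and t_ge: "t \<ge> 1"
    and t_nonint: "t \<notin> \<int>"
    and m1_def: "\<And>n. m1 n = pos_part (mu n - (t - of_int \<lfloor>t\<rfloor>))"
    and m2_def: "\<And>n. m2 n = pos_part (mu n - (of_int \<lceil>t\<rceil> - t))"
    and r_def: "r = (of_int \<lfloor>t\<rfloor> * (of_int \<lceil>t\<rceil> - t) - (\<Sum>n=1..N. m1 n))
                    / (t - (\<Sum>n=1..N. m1 n) - (\<Sum>n=1..N. m2 n))"
    and muF_def: "\<And>n. muF n = m1 n + (mu n - m1 n - m2 n) * r"
    and muC_def: "\<And>n. muC n = m2 n + (mu n - m1 n - m2 n) * (1 - r)"
  shows "(\<forall>n\<in>{1..N}. 0 \<le> muF n \<and> 0 \<le> muC n)
    \<and> (\<forall>n\<in>{1..N}. muF n + muC n = mu n)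
    \<and> (\<Sum>n=1..N. muF n) = of_int \<lfloor>t\<rfloor> * (of_int \<lceil>t\<rceil> - t)
    \<and> (\<Sum>n=1..N. muC n) = of_int \<lceil>t\<rceil> * (t - of_int \<lfloor>t\<rfloor>)
    \<and> (\<forall>n\<in>{1..N}. muF n \<le> of_int \<lceil>t\<rceil> - t \<and> muC n \<le> t - of_int \<lfloor>t\<rfloor>)"
proof -
  define k where "k = \<lfloor>t\<rfloor>"
  define f where "f = t - of_int k"
  have tneq: "t \<noteq> of_int k" using t_nonint by (metis Ints_of_int)
  have ceil: "\<lceil>t\<rceil> = k + 1" using tneq by (simp add: ceiling_altdef k_def)
  have f1: "f < 1" unfolding f_def k_def by linarith
  have "of_int k \<le> t" unfolding k_def by simp
  then have f0: "0 < f" using tneq unfolding f_def by linarith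
  have k1: "k \<ge> 1" using t_ge unfolding k_def by (simp add: le_floor_iff)
  define K where "K = nat k"
  have kK: "real_of_int k = real K" using k1 by (simp add: K_def)
  have c: "of_int \<lceil>t\<rceil> - t = 1 - f" using ceil by (simp add: f_def)
  have fl: "t - of_int \<lfloor>t\<rfloor> = f" by (simp add: f_def k_def)
  have m1e: "\<And>n. m1 n = pos_part (mu n - f)" using m1_def fl by simp
  have m2e: "\<And>n. m2 n = pos_part (mu n - (1 - f))" using m2_def c by simp
  define S1 where "S1 = (\<Sum>n=1..N. m1 n)"
  define S2 where "S2 = (\<Sum>n=1..N. m2 n)"
  define D where "D = t - S1 - S2"
  have mb: "\<forall>n\<in>{1..N}. 0 \<le> mu n \<and> mu n \<le> 1" using mu_bounds by blast
  have tk: "t = real K + f" using kK by (simp add: f_def)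
  have S1b: "S1 \<le> real K * (1 - f)"
    unfolding S1_def m1e
    by (rule sum_pos_part_bound) (use mb f0 f1 t_def tk in auto)
  have S2b: "S2 \<le> real (K + 1) * (1 - (1 - f))"
    unfolding S2_def m2e
    by (rule sum_pos_part_bound) (use mb f0 f1 t_def tk in auto)
  have pn: "\<And>n. n \<in> {1..N} \<Longrightarrow> 0 \<le> m1 n \<and> 0 \<le> m2 n \<and> 0 \<le> mu n - m1 n - m2 n
      \<and> mu n - m2 n \<le> 1 - f \<and> mu n - m1 n \<le> f"
    using mb f0 f1 unfolding m1e m2e pos_part_def by (auto simp: max_def)
  have sumd: "(\<Sum>n=1..N. mu n - m1 n - m2 n) = D"
    by (simp add: sum_subtractf D_def S1_def S2_def t_def)
  have rdef: "r = (real K * (1 - f) - S1) / D"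
    using r_def kK c unfolding S1_def S2_def D_def k_def by simp
  have lo: "S1 \<le> real K * (1 - f)" by (rule S1b)
  have hi: "real K * (1 - f) - S1 \<le> D" using S2b tk unfolding D_def by (simp add: algebra_simps)
  have r01: "0 \<le> r \<and> r \<le> 1"
  proof (cases "D = 0")
    case True then show ?thesis by (simp add: rdef)
  next
    case False
    then have "D > 0" using lo hi by linarith
    then show ?thesis using lo hi by (simp add: rdef divide_le_eq_1)
  qed
  have sumF: "(\<Sum>n=1..N. muF n) = real K * (1 - f)"
  proof -
    have "(\<Sum>n=1..N. muF n) = S1 + D * r"
    proof -
      have "(\<Sum>n=1..N. muF n) = S1 + (\<Sum>n=1..N. (mu n - m1 n - m2 n) * r)"
        by (simp add: muF_def sum.distrib S1_def)
      also have "(\<Sum>n=1..N. (mu n - m1 n - m2 n) * r) = D * r"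
        by (simp only: sum_distrib_right[symmetric] sumd)
      finally show ?thesis by simp
    qed
    also have "\<dots> = real K * (1 - f)"
    proof (cases "D = 0")
      case True then show ?thesis using lo hi by simp
    next
      case False then show ?thesis by (simp add: rdef)
    qed
    finally show ?thesis .
  qed
  have add: "\<forall>n\<in>{1..N}. muF n + muC n = mu n"
    by (simp add: muF_def muC_def algebra_simps)
  have sumC: "(\<Sum>n=1..N. muC n) = t - real K * (1 - f)"
  proof -
    have "(\<Sum>n=1..N. muF n) + (\<Sum>n=1..N. muC n) = t"
      using add by (simp add: sum.distrib[symmetric] t_def)
    then show ?thesis using sumF by simp
  qed
  have nonneg: "\<forall>n\<in>{1..N}. 0 \<le> muF n \<and> 0 \<le> muC n"
    using pn r01 by (auto simp: muF_def muC_def)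
  have bnd: "\<forall>n\<in>{1..N}. muF n \<le> 1 - f \<and> muC n \<le> f"
  proof
    fix n assume n: "n \<in> {1..N}"
    let ?d = "mu n - m1 n - m2 n"
    have "?d * r \<le> ?d" "?d * (1 - r) \<le> ?d" using pn[OF n] r01
      by (auto intro: mult_left_le)
    then show "muF n \<le> 1 - f \<and> muC n \<le> f" using pn[OF n] by (simp add: muF_def muC_def)
  qed
  show ?thesis
    using nonneg add sumF sumC bnd c fl ceil kK tk
    by (simp add: k_def algebra_simps)
qed

end
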